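(* Fix a toric poset $P=P(G,[\omega])$ and $i,j,k\in V$. Then $k\in[i,j]^{\mathrm{tor}}$ if and only if $k$ lies on a toric directed path $i\to_{\mathrm{tor}}j$ in $\bar\omega'$ for some $\bar\omega'\in[\bar\omega^{\mathrm{tor}}(P)]$.
   Context: Toric poset setup: $V=[n]$; $\mathrm{Acyc}(G)$ acyclic orientations; $[\omega]$ the class under the equivalence generated by converting a source into a sink (flips); toric chambers of the toric graphic arrangement $\mathcal{A}_{\mathrm{tor}}(G)$ (components of $\mathbb{R}^V/\mathbb{Z}^V$ minus the toric hyperplanes $H^{\mathrm{tor}}_{ij}=\{x_i\equiv x_j\bmod 1\}$, $\{i,j\}\in E$) correspond bijectively to classes $[\omega]$; $P(G,[\omega])$ is identified with its chamber $c(P)$. Toric transitive closure: $\bar G^{\mathrm{tor}}(P)$ is the graph on $V$ whose edges are those of $G$ together with all $\{i,j\}$ with $H^{\mathrm{tor}}_{ij}\cap c(P)=\emptyset$; $c(P)$ is also a chamber of $\mathcal{A}_{\mathrm{tor}}(\bar G^{\mathrm{tor}}(P))$, and $[\bar\omega^{\mathrm{tor}}(P)]$ is the corresponding class of acyclic orientations of $\bar G^{\mathrm{tor}}(P)$. A toric directed path $i_1\to_{\mathrm{tor}}i_m$ in an orientation is a directed path $i_1\to i_2\to\cdots\to i_m$ such that the edge $i_1\to i_m$ is also present (a single vertex and a single edge count as toric directed paths). Toric chain: $C=\{i_1,\dots,i_m\}$ is a toric chain of $P$ if there is a cyclic class $[(i_1,\dots,i_m)]$ such that for every $x\in c(P)$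 (coordinates in $[0,1)$) some cyclic shift $(j_1,\dots,j_m)$ has $0\le x_{j_1}<\dots<x_{j_m}<1$; write $P|_C=[(i_1,\dots,i_m)]$. Toric interval: $[i,i]^{\mathrm{tor}}=\{i\}$; for $i\ne j$, $[i,j]^{\mathrm{tor}}=\emptyset$ if $\{i,j\}$ is not a toric chain and otherwise $[i,j]^{\mathrm{tor}}=\{i,j\}\cup\{k: P|_{\{i,j,k\}}=[(i,k,j)]\}$. *)

theory Defs
  imports Main "HOL.Real"
begin

definition simple_graph :: "nat set \<Rightarrow> nat set set \<Rightarrow> bool" where
  "simple_graph V E \<longleftrightarrow> finite V \<and> (\<forall>e\<in>E. \<exists>i j. e = {i, j} \<and> i \<noteq> j \<and> i \<in> V \<and> j \<in> V)"

definition is_orientation :: "nat set set \<Rightarrow> (nat \<times> nat) set \<Rightarrow> bool" where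
  "is_orientation E \<omega> \<longleftrightarrow> \<omega> \<subseteq> {(i, j). {i, j} \<in> E \<and> i \<noteq> j} \<and>
     (\<forall>i j. {i, j} \<in> E \<and> i \<noteq> j \<longrightarrow> ((i, j) \<in> \<omega> \<longleftrightarrow> (j, i) \<notin> \<omega>))"

definition acyc_orient :: "nat set set \<Rightarrow> (nat \<times> nat) set \<Rightarrow> bool" where
  "acyc_orient E \<omega> \<longleftrightarrow> is_orientation E \<omega> \<and> acyclic \<omega>"

definition is_source :: "(nat \<times> nat) set \<Rightarrow> nat \<Rightarrow> bool" where
  "is_source \<omega> v \<longleftrightarrow> (\<forall>u. (u, v) \<notin> \<omega>)"

definition flip_at :: "(nat \<times> nat) set \<Rightarrow> nat \<Rightarrow> (nat \<times> nat) set" where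
  "flip_at \<omega> v = {(a, b). (a, b) \<in> \<omega> \<and> a \<noteq> v \<and> b \<noteq> v} \<union>
                  {(b, a) | a b. (a, b) \<in> \<omega> \<and> (a = v \<or> b = v)}"

definition flip_step :: "(nat \<times> nat) set \<Rightarrow> (nat \<times> nat) set \<Rightarrow> bool" where
  "flip_step \<omega> \<omega>' \<longleftrightarrow> (\<exists>v. is_source \<omega> v \<and> \<omega>' = flip_at \<omega> v)"

definition tor_equiv :: "(nat \<times> nat) set \<Rightarrow> (nat \<times> nat) set \<Rightarrow> bool" where
  "tor_equiv = (\<lambda>a b. flip_step a b \<or> flip_step b a)\<^sup>*\<^sup>*"

definition tor_class :: "nat set set \<Rightarrow> (nat \<times> nat) set \<Rightarrow> (nat \<times> nat) set set" where
  "tor_class E \<omega> = {\<omega>'. acyc_orient E \<omega>' \<and> tor_equiv \<omega> \<omega>'}"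

definition orient_of :: "nat set set \<Rightarrow> (nat \<Rightarrow> real) \<Rightarrow> (nat \<times> nat) set" where
  "orient_of E x = {(i, j). {i, j} \<in> E \<and> x i < x j}"

text \<open>Points of the torus R^V/Z^V, represented by coordinates in [0,1) (0 outside V).\<close>
definition torus_points :: "nat set \<Rightarrow> (nat \<Rightarrow> real) set" where
  "torus_points V = {x. (\<forall>i\<in>V. 0 \<le> x i \<and> x i < 1) \<and> (\<forall>i. i \<notin> V \<longrightarrow> x i = 0)}"

text \<open>The toric chamber c(P) of P = P(G,[omega]): the points off all toric hyperplanes
  whose induced orientation lies in [omega] (the chamber/class bijection).\<close>
definition chamber :: "nat set \<Rightarrow> nat set set \<Rightarrow> (nat \<times> nat) set \<Rightarrow> (nat \<Rightarrow> real) set" where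
  "chamber V E \<omega> = {x \<in> torus_points V.
      (\<forall>i j. {i, j} \<in> E \<and> i \<noteq> j \<longrightarrow> x i \<noteq> x j) \<and> tor_equiv \<omega> (orient_of E x)}"

definition tor_closure :: "nat set \<Rightarrow> nat set set \<Rightarrow> (nat \<times> nat) set \<Rightarrow> nat set set" where
  "tor_closure V E \<omega> = E \<union> {{i, j} | i j. i \<in> V \<and> j \<in> V \<and> i \<noteq> j \<and>
                                   (\<forall>x\<in>chamber V E \<omega>. x i \<noteq> x j)}"

definition tor_closure_class :: "nat set \<Rightarrow> nat set set \<Rightarrow> (nat \<times> nat) set \<Rightarrow> (nat \<times> nat) set set" where
  "tor_closure_class V E \<omega> =
     {\<omega>'. \<exists>x\<in>chamber V E \<omega>. \<omega>' \<in> tor_class (tor_closure V E \<omega>) (orient_of (tor_closure V E \<omega>) x)}"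

definition cyc_restr :: "nat set \<Rightarrow> nat set set \<Rightarrow> (nat \<times> nat) set \<Rightarrow> nat list \<Rightarrow> bool" where
  "cyc_restr V E \<omega> l \<longleftrightarrow>
     (\<forall>x\<in>chamber V E \<omega>. \<exists>r<length l. sorted_wrt (\<lambda>a b. x a < x b) (rotate r l))"

definition toric_chain :: "nat set \<Rightarrow> nat set set \<Rightarrow> (nat \<times> nat) set \<Rightarrow> nat set \<Rightarrow> bool" where
  "toric_chain V E \<omega> C \<longleftrightarrow> (\<exists>l. distinct l \<and> set l = C \<and> C \<subseteq> V \<and> cyc_restr V E \<omega> l)"

definition toric_interval :: "nat set \<Rightarrow> nat set set \<Rightarrow> (nat \<times> nat) set \<Rightarrow> nat \<Rightarrow> nat \<Rightarrow> nat set" where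
  "toric_interval V E \<omega> i j =
     (if i = j then {i}
      else if \<not> toric_chain V E \<omega> {i, j} then {}
      else {i, j} \<union> {k. k \<in> V \<and> distinct [i, k, j] \<and> cyc_restr V E \<omega> [i, k, j]})"

definition toric_dpath :: "(nat \<times> nat) set \<Rightarrow> nat list \<Rightarrow> nat \<Rightarrow> nat \<Rightarrow> bool" where
  "toric_dpath \<omega> p i j \<longleftrightarrow> p \<noteq> [] \<and> distinct p \<and> hd p = i \<and> last p = j \<and>
     (\<forall>q. Suc q < length p \<longrightarrow> (p ! q, p ! Suc q) \<in> \<omega>) \<and>
     (2 \<le> length p \<longrightarrow> (i, j) \<in> \<omega>)"

end

theory Submission
  imports Defs
begin

lemma pair_set_eqI: "(\<And>a b. (a,b)\<in>A \<longleftrightarrow> (a,b)\<in>B) \<Longrightarrow> A = B" by auto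

lemma flip_at_iff: "(a,b) \<in> flip_at R v \<longleftrightarrow> (if a = v \<or> b = v then (b,a) \<in> R else (a,b) \<in> R)"
  unfolding flip_at_def by auto

lemma flip_at_invol: "flip_at (flip_at R v) v = R"
  by (rule pair_set_eqI) (auto simp: flip_at_iff)

lemma sum_rot: "(\<Sum>t<L. f (Suc t mod L)) = (\<Sum>t<(L::nat). f t)"
proof (cases L)
  case 0 then show ?thesis by simp
next
  case (Suc m)
  have "(\<Sum>t<Suc m. f (Suc t mod Suc m)) = (\<Sum>t<m. f (Suc t mod Suc m)) + f 0"
    by simp
  moreover have "(\<Sum>t<m. f (Suc t mod Suc m)) = (\<Sum>t<m. f (Suc t))"
    by (rule sum.cong) auto
  moreover have "(\<Sum>t<Suc m. f t) = f 0 + (\<Sum>t<m. f (Suc t))"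
    by (rule sum.lessThan_Suc_shift)
  ultimately show ?thesis using Suc by (metis add.commute)
qed

lemma sum_shift_cancel:
  assumes "\<forall>t<L. g' t + (if h (Suc t mod L) then 1 else 0) = g t + (if h t then (1::nat) else 0)"
  shows "(\<Sum>t<L. g' t) = (\<Sum>t<L. g t)"
proof -
  have "(\<Sum>t<L. g' t) + (\<Sum>t<L. if h (Suc t mod L) then 1 else 0) = (\<Sum>t<L. g t) + (\<Sum>t<L. if h t then 1 else (0::nat))"
    unfolding sum.distrib[symmetric] by (rule sum.cong) (use assms in auto)
  moreover have "(\<Sum>t<L. if h (Suc t mod L) then 1 else (0::nat)) = (\<Sum>t<L. if h t then 1 else 0)"
    by (rule sum_rot)
  ultimately show ?thesis by simp
qed

lemma sorted_wrt_pair: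
  "sorted_wrt P xs \<Longrightarrow> a \<in> set xs \<Longrightarrow> b \<in> set xs \<Longrightarrow> a \<noteq> b \<Longrightarrow> P a b \<or> P b a"
  by (induction xs) auto

lemma cyc_distinct_vals:
  fixes x :: "nat \<Rightarrow> real"
  assumes "sorted_wrt (\<lambda>a b. x a < x b) (rotate r l)" "a \<in> set l" "b \<in> set l" "a \<noteq> b"
  shows "x a \<noteq> x b"
  using sorted_wrt_pair[OF assms(1), of a b] assms(2-4) by (auto simp: set_rotate)

lemma distinct_hd_last: "distinct p \<Longrightarrow> p \<noteq> [] \<Longrightarrow> hd p = last p \<Longrightarrow> p = [hd p]"
  by (cases p) (auto split: if_splits)

lemma acyclic_lt: "acyclic {(a,b). (y a :: real) < y b}"
proof -
  have "{(a,b). y a < y b}\<^sup>+ \<subseteq> {(a,b). y a < y b}"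
  proof
    fix p assume "p \<in> {(a,b). y a < y b}\<^sup>+"
    then show "p \<in> {(a,b). y a < y b}"
      by (cases p) (auto elim: trancl_induct)
  qed
  then show ?thesis unfolding acyclic_def by auto
qed


lemma tor_equiv_refl: "tor_equiv a a"
  unfolding tor_equiv_def by simp

lemma tor_equiv_sym: "tor_equiv a b \<Longrightarrow> tor_equiv b a"
  unfolding tor_equiv_def
proof (induction rule: rtranclp_induct)
  case base then show ?case by simp
next
  case (step y z)
  have "(\<lambda>a b. flip_step a b \<or> flip_step b a) z y" using step(2) by blast
  from converse_rtranclp_into_rtranclp[OF this step(3)] show ?case .
qed

lemma tor_equiv_trans: "tor_equiv a b \<Longrightarrow> tor_equiv b c \<Longrightarrow> tor_equiv a c"
  unfolding tor_equiv_def by (rule rtranclp_trans)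

lemma tor_equiv_step: "tor_equiv a b \<Longrightarrow> flip_step b c \<or> flip_step c b \<Longrightarrow> tor_equiv a c"
  unfolding tor_equiv_def by (rule rtranclp.rtrancl_into_rtrancl)

lemma orient_acyc:
  assumes "\<forall>a b. {a,b} \<in> G \<longrightarrow> a \<noteq> b \<longrightarrow> (y::nat\<Rightarrow>real) a \<noteq> y b"
  shows "acyc_orient G (orient_of G y)"
proof -
  have "is_orientation G (orient_of G y)"
    unfolding is_orientation_def
  proof (intro conjI allI impI)
    show "orient_of G y \<subseteq> {(i, j). {i, j} \<in> G \<and> i \<noteq> j}"
      unfolding orient_of_def by auto
  next
    fix i j assume "{i,j} \<in> G \<and> i \<noteq> j"
    then have "y i \<noteq> y j" "{j,i} \<in> G" using assms by (auto simp: insert_commute)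
    then show "(i, j) \<in> orient_of G y \<longleftrightarrow> (j, i) \<notin> orient_of G y"
      unfolding orient_of_def using \<open>{i,j} \<in> G \<and> i \<noteq> j\<close> by auto
  qed
  moreover have "acyclic (orient_of G y)"
    by (rule acyclic_subset[OF acyclic_lt[of y]]) (auto simp: orient_of_def)
  ultimately show ?thesis unfolding acyc_orient_def by simp
qed

lemma orient_flip:
  assumes "is_orientation G R"
  shows "is_orientation G (flip_at R v)"
  unfolding is_orientation_def
proof (intro conjI allI impI)
  show "flip_at R v \<subseteq> {(i, j). {i, j} \<in> G \<and> i \<noteq> j}"
  proof
    fix p assume "p \<in> flip_at R v"
    then obtain a b where p: "p = (a,b)" "(a,b) \<in> flip_at R v" by (cases p) auto
    then have "(a,b) \<in> R \<or> (b,a) \<in> R" by (auto simp: flip_at_iff split: if_splits)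
    moreover have "R \<subseteq> {(i, j). {i, j} \<in> G \<and> i \<noteq> j}"
      using assms unfolding is_orientation_def by blast
    ultimately have "{a,b} \<in> G \<and> a \<noteq> b" by (metis (mono_tags, lifting) case_prodD insert_commute mem_Collect_eq subsetD)
    then show "p \<in> {(i, j). {i, j} \<in> G \<and> i \<noteq> j}"
      using p(1) by simp
  qed
next
  fix i j assume h: "{i,j} \<in> G \<and> i \<noteq> j"
  then have "{j,i} \<in> G" by (simp add: insert_commute)
  then have "(i, j) \<in> R \<longleftrightarrow> (j, i) \<notin> R" "(j, i) \<in> R \<longleftrightarrow> (i, j) \<notin> R"
    using assms h unfolding is_orientation_def by blast+
  then show "(i, j) \<in> flip_at R v \<longleftrightarrow> (j, i) \<notin> flip_at R v"
    unfolding flip_at_iff by (smt (verit))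
qed

definition lift :: "nat set \<Rightarrow> (nat \<Rightarrow> real) \<Rightarrow> nat \<Rightarrow> real" where
  "lift S x = (\<lambda>w. if w \<in> S then x w + 1 else x w)"

definition Dc :: "(nat \<Rightarrow> real) \<Rightarrow> nat list \<Rightarrow> nat" where
  "Dc z c = (\<Sum>t<length c. if z (c!(Suc t mod length c)) < z (c!t) then 1 else 0)"

definition Bc :: "(nat \<times> nat) set \<Rightarrow> nat list \<Rightarrow> nat" where
  "Bc R c = (\<Sum>t<length c. if (c!t, c!(Suc t mod length c)) \<in> R then 0 else 1)"

locale tp =
  fixes V :: "nat set" and E :: "nat set set" and \<omega> :: "(nat \<times> nat) set"
  assumes sg: "simple_graph V E" and ac: "acyc_orient E \<omega>"
begin

abbreviation "F \<equiv> tor_closure V E \<omega>"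
abbreviation "Ch \<equiv> chamber V E \<omega>"

definition "Fcyc c \<longleftrightarrow> (\<forall>t<length c. {c!t, c!(Suc t mod length c)} \<in> F)"

lemma E_edge: "{a,b} \<in> E \<Longrightarrow> a \<noteq> b \<and> a \<in> V \<and> b \<in> V"
proof -
  assume "{a,b} \<in> E"
  then obtain i j where "{a,b} = {i,j}" "i \<noteq> j" "i \<in> V" "j \<in> V"
    using sg unfolding simple_graph_def by blast
  then show ?thesis by (auto simp: doubleton_eq_iff)
qed

lemma F_edge: "{a,b} \<in> F \<Longrightarrow> a \<noteq> b \<and> a \<in> V \<and> b \<in> V"
  unfolding tor_closure_def using E_edge by (auto simp: doubleton_eq_iff)

lemma E_F: "e \<in> E \<Longrightarrow> e \<in> F"
  unfolding tor_closure_def by simp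

lemma ch_Edist: "x \<in> Ch \<Longrightarrow> {a,b} \<in> E \<Longrightarrow> x a \<noteq> x b"
  unfolding chamber_def using E_edge by blast

lemma ch_Fdist: "x \<in> Ch \<Longrightarrow> {a,b} \<in> F \<Longrightarrow> x a \<noteq> x b"
proof -
  assume x: "x \<in> Ch" and e: "{a,b} \<in> F"
  show ?thesis
  proof (cases "{a,b} \<in> E")
    case True then show ?thesis using ch_Edist x by blast
  next
    case False
    then obtain i j where "{a,b} = {i,j}" "\<forall>x\<in>Ch. x i \<noteq> x j"
      using e unfolding tor_closure_def by blast
    then show ?thesis using x by (auto simp: doubleton_eq_iff)
  qed
qed

lemma ch_torus: "x \<in> Ch \<Longrightarrow> a \<in> V \<Longrightarrow> 0 \<le> x a \<and> x a < 1"
  unfolding chamber_def torus_points_def by auto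

lemma ch_equiv: "x \<in> Ch \<Longrightarrow> tor_equiv \<omega> (orient_of E x)"
  unfolding chamber_def by auto

lemma ch_intro:
  assumes "\<forall>a\<in>V. 0 \<le> x a \<and> x a < 1" "\<forall>a. a \<notin> V \<longrightarrow> x a = 0"
    "\<forall>a b. {a,b} \<in> E \<longrightarrow> x a \<noteq> x b" "tor_equiv \<omega> (orient_of E x)"
  shows "x \<in> Ch"
  using assms unfolding chamber_def torus_points_def by auto


lemma om_sub: "(a,b) \<in> \<omega> \<Longrightarrow> {a,b} \<in> E \<and> a \<noteq> b"
  using ac unfolding acyc_orient_def is_orientation_def by blast

lemma om_tot: "{a,b} \<in> E \<Longrightarrow> (a,b) \<in> \<omega> \<or> (b,a) \<in> \<omega>"
  using ac E_edge unfolding acyc_orient_def is_orientation_def by blast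

lemma finV: "finite V" using sg unfolding simple_graph_def by blast

lemma lt_imp_lt: "(a, b) \<in> \<omega> \<Longrightarrow> card {c. (c,a) \<in> \<omega>\<^sup>+} < card {c. (c,b) \<in> \<omega>\<^sup>+}"
  and A_sub: "{c. (c,a) \<in> \<omega>\<^sup>+} \<subseteq> V"
proof -
  have AV: "{c. (c,a) \<in> \<omega>\<^sup>+} \<subseteq> V" for a
  proof
    fix c assume "c \<in> {c. (c,a) \<in> \<omega>\<^sup>+}"
    then obtain d where "(c,d) \<in> \<omega>" using tranclD by fastforce
    then show "c \<in> V" using om_sub E_edge by blast
  qed
  then show "{c. (c,a) \<in> \<omega>\<^sup>+} \<subseteq> V" .
  assume ab: "(a,b) \<in> \<omega>"
  have "{c. (c,a) \<in> \<omega>\<^sup>+} \<subset> {c. (c,b) \<in> \<omega>\<^sup>+}"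
  proof -
    have "{c. (c,a) \<in> \<omega>\<^sup>+} \<subseteq> {c. (c,b) \<in> \<omega>\<^sup>+}" using ab trancl_into_trancl by fastforce
    moreover have "a \<in> {c. (c,b) \<in> \<omega>\<^sup>+}" using ab by auto
    moreover have "a \<notin> {c. (c,a) \<in> \<omega>\<^sup>+}" using ac unfolding acyc_orient_def acyclic_def by blast
    ultimately show ?thesis by blast
  qed
  then show "card {c. (c,a) \<in> \<omega>\<^sup>+} < card {c. (c,b) \<in> \<omega>\<^sup>+}"
    by (rule psubset_card_mono[OF finite_subset[OF AV finV]])
qed

lemma ch_nonempty: "\<exists>x. x \<in> Ch"
proof -
  define N where "N = real (card V + 1)"
  have Npos: "N > 0" unfolding N_def by simp
  define x where "x a = (if a \<in> V then real (card {c. (c,a) \<in> \<omega>\<^sup>+}) / N else 0)" for a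
  have xlt: "x a < x b" if "(a,b) \<in> \<omega>" for a b
  proof -
    have "a \<in> V" "b \<in> V" using om_sub[OF that] E_edge by blast+
    then show ?thesis unfolding x_def using lt_imp_lt[OF that] Npos by (simp add: divide_strict_right_mono)
  qed
  have orient: "orient_of E x = \<omega>"
  proof (rule pair_set_eqI)
    fix a b
    show "(a,b) \<in> orient_of E x \<longleftrightarrow> (a,b) \<in> \<omega>"
    proof
      assume "(a,b) \<in> orient_of E x"
      then have "{a,b} \<in> E" "x a < x b" unfolding orient_of_def by auto
      then show "(a,b) \<in> \<omega>" using om_tot xlt by fastforce
    next
      assume "(a,b) \<in> \<omega>"
      then show "(a,b) \<in> orient_of E x" unfolding orient_of_def using om_sub xlt by auto
    qed
  qed
  have "x \<in> Ch"
  proof (rule ch_intro)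
    show "\<forall>a\<in>V. 0 \<le> x a \<and> x a < 1"
    proof
      fix a assume "a \<in> V"
      have "card {c. (c,a) \<in> \<omega>\<^sup>+} \<le> card V" by (rule card_mono[OF finV A_sub])
      then have "real (card {c. (c,a) \<in> \<omega>\<^sup>+}) < N" unfolding N_def by simp
      then show "0 \<le> x a \<and> x a < 1" unfolding x_def using \<open>a \<in> V\<close> Npos by simp
    qed
    show "\<forall>a. a \<notin> V \<longrightarrow> x a = 0" unfolding x_def by simp
    show "\<forall>a b. {a,b} \<in> E \<longrightarrow> x a \<noteq> x b" using om_tot xlt by (metis less_irrefl)
    show "tor_equiv \<omega> (orient_of E x)" using orient tor_equiv_refl by simp
  qed
  then show ?thesis by blast
qed


lemma F_intro: "a \<in> V \<Longrightarrow> b \<in> V \<Longrightarrow> a \<noteq> b \<Longrightarrow> \<forall>z\<in>Ch. z a \<noteq> z b \<Longrightarrow> {a,b} \<in> F"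
  unfolding tor_closure_def by blast

lemma lift_flip:
  assumes x: "\<forall>w\<in>V. 0 \<le> x w \<and> x w < 1" "\<forall>a b. {a,b} \<in> F \<longrightarrow> x a \<noteq> x b"
    and S0: "v \<notin> S0" "v \<in> V" "\<forall>s\<in>S0. x s \<le> x v" "\<forall>w\<in>V. w \<notin> S0 \<longrightarrow> x v \<le> x w"
  shows "flip_step (orient_of F (lift S0 x)) (orient_of F (lift (insert v S0) x))"
proof -
  define y where "y = lift S0 x"
  define y' where "y' = lift (insert v S0) x"
  have xv: "0 \<le> x v" "x v < 1" using x(1) S0(2) by auto
  have nb: "y v < y u" if "{u,v} \<in> F" for u
  proof -
    have u: "u \<noteq> v" "u \<in> V" using F_edge[OF that] by auto
    have d: "x u \<noteq> x v" using x(2) that by blast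
    have xu: "0 \<le> x u" "x u < 1" using x(1) u(2) by auto
    show ?thesis
    proof (cases "u \<in> S0")
      case True then show ?thesis using S0(1) xu xv unfolding y_def lift_def by simp
    next
      case False then have "x v \<le> x u" using S0(4) u(2) by blast
      then show ?thesis using False S0(1) d unfolding y_def lift_def by simp
    qed
  qed
  have nb2: "y' u < y' v" if "{u,v} \<in> F" for u
  proof -
    have u: "u \<noteq> v" "u \<in> V" using F_edge[OF that] by auto
    have d: "x u \<noteq> x v" using x(2) that by blast
    have xu: "0 \<le> x u" "x u < 1" using x(1) u(2) by auto
    show ?thesis
    proof (cases "u \<in> S0")
      case True then have "x u \<le> x v" using S0(3) by blast
      then show ?thesis using True u(1) d unfolding y'_def lift_def by simp
    next
      case False then show ?thesis using u(1) xu xv unfolding y'_def lift_def by simp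
    qed
  qed
  have src: "is_source (orient_of F y) v"
    unfolding is_source_def orient_of_def
  proof (intro allI notI)
    fix u assume "(u, v) \<in> {(i, j). {i, j} \<in> F \<and> y i < y j}"
    then have "{u,v} \<in> F" "y u < y v" by auto
    then show False using nb by fastforce
  qed
  have eq: "orient_of F y' = flip_at (orient_of F y) v"
  proof (rule pair_set_eqI)
    fix a b
    show "(a,b) \<in> orient_of F y' \<longleftrightarrow> (a,b) \<in> flip_at (orient_of F y) v"
    proof (cases "a = v")
      case True
      have c1: "\<not> ({v,b} \<in> F \<and> y' v < y' b)"
      proof
        assume h: "{v,b} \<in> F \<and> y' v < y' b"
        then have "{b,v} \<in> F" by (simp add: insert_commute)
        then show False using nb2[of b] h by linarith
      qed
      have c2: "\<not> ({b,v} \<in> F \<and> y b < y v)" using nb[of b] by fastforce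
      show ?thesis using True c1 c2 unfolding flip_at_iff orient_of_def by (simp; blast)
    next
      case False
      show ?thesis
      proof (cases "b = v")
        case True
        have c1: "({a,v} \<in> F \<and> y' a < y' v) \<longleftrightarrow> {a,v} \<in> F" using nb2[of a] by blast
        have "{v,a} = {a,v}" by (simp add: insert_commute)
        then have c2: "({v,a} \<in> F \<and> y v < y a) \<longleftrightarrow> {a,v} \<in> F" using nb[of a] by auto
        show ?thesis using True False c1 c2 unfolding flip_at_iff orient_of_def by simp
      next
        case False2: False
        have "y' a = y a" "y' b = y b" using False False2 unfolding y_def y'_def lift_def by auto
        then show ?thesis using False False2 unfolding flip_at_iff orient_of_def by simp
      qed
    qed
  qed
  show ?thesis unfolding flip_step_def y_def[symmetric] y'_def[symmetric] using src eq by blast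
qed

lemma lift_equiv:
  assumes x: "\<forall>w\<in>V. 0 \<le> x w \<and> x w < 1" "\<forall>a b. {a,b} \<in> F \<longrightarrow> x a \<noteq> x b"
    and S: "finite S"
  shows "S \<subseteq> V \<longrightarrow> (\<forall>s\<in>S. \<forall>w\<in>V. w \<notin> S \<longrightarrow> x s \<le> x w) \<longrightarrow> tor_equiv (orient_of F x) (orient_of F (lift S x))"
  using S
proof (induction S rule: finite_remove_induct)
  case empty
  have "lift {} x = x" unfolding lift_def by simp
  then show ?case using tor_equiv_refl by simp
next
  case (remove A)
  show ?case
  proof (intro impI)
    assume AV: "A \<subseteq> V" and dc: "\<forall>s\<in>A. \<forall>w\<in>V. w \<notin> A \<longrightarrow> x s \<le> x w"
    obtain v where v: "v \<in> A" "\<forall>s\<in>A. x s \<le> x v"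
    proof -
      have "Max (x ` A) \<in> x ` A" using remove(1,2) by simp
      then obtain v where "v \<in> A" "x v = Max (x ` A)" by auto
      moreover have "\<forall>s\<in>A. x s \<le> Max (x ` A)" using remove(1) by simp
      ultimately show ?thesis using that by auto
    qed
    have dc0: "\<forall>s\<in>A - {v}. \<forall>w\<in>V. w \<notin> A - {v} \<longrightarrow> x s \<le> x w"
      using dc v by auto
    have IH: "tor_equiv (orient_of F x) (orient_of F (lift (A - {v}) x))"
      using remove(4)[OF v(1)] AV dc0 by blast
    have fs: "flip_step (orient_of F (lift (A - {v}) x)) (orient_of F (lift (insert v (A - {v})) x))"
      by (rule lift_flip[OF x]) (use v AV dc in auto)
    have "insert v (A - {v}) = A" using v(1) by auto
    then show "tor_equiv (orient_of F x) (orient_of F (lift A x))"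
      using tor_equiv_step[OF IH] fs by auto
  qed
qed

lemma toric_dpath2: "(i,j) \<in> R \<Longrightarrow> i \<noteq> j \<Longrightarrow> toric_dpath R [i,j] i j"
  unfolding toric_dpath_def
  by (simp add: All_less_Suc)
lemma toric_dpath3: "(i,k) \<in> R \<Longrightarrow> (k,j) \<in> R \<Longrightarrow> (i,j) \<in> R \<Longrightarrow> distinct [i,k,j] \<Longrightarrow> toric_dpath R [i,k,j] i j"
  unfolding toric_dpath_def
  by (simp add: All_less_Suc numeral_3_eq_3)
lemma rot3: "r < 3 \<Longrightarrow> rotate r [a,b,c] = [a,b,c] \<or> rotate r [a,b,c] = [b,c,a] \<or> rotate r [a,b,c] = [c,a,b]"
proof -
  assume "r < 3"
  then have "r = 0 \<or> r = 1 \<or> r = 2" by auto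
  then show ?thesis by (auto simp: numeral_2_eq_2)
qed

lemma fwd:
  assumes x: "x \<in> Ch" and ij: "i \<in> V" "j \<in> V" "i \<noteq> j" "\<forall>z\<in>Ch. z i \<noteq> z j"
    and k: "k = i \<or> k = j \<or> (k \<in> V \<and> distinct [i,k,j] \<and> cyc_restr V E \<omega> [i,k,j])"
  shows "\<exists>\<omega>'\<in>tor_closure_class V E \<omega>. \<exists>p. toric_dpath \<omega>' p i j \<and> k \<in> set p"
proof -
  define S where "S = {w\<in>V. x w < x i}"
  define y where "y = lift S x"
  have x01: "\<forall>w\<in>V. 0 \<le> x w \<and> x w < 1" using ch_torus[OF x] by blast
  have xF: "\<forall>a b. {a,b} \<in> F \<longrightarrow> x a \<noteq> x b" using ch_Fdist[OF x] by blast
  have yv: "y w = (if x w < x i then x w + 1 else x w)" if "w \<in> V" for w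
    using that unfolding y_def lift_def S_def by auto
  have yF: "\<forall>a b. {a,b} \<in> F \<longrightarrow> a \<noteq> b \<longrightarrow> y a \<noteq> y b"
  proof (intro allI impI)
    fix a b assume e: "{a,b} \<in> F" "a \<noteq> b"
    then have ab: "a \<in> V" "b \<in> V" "x a \<noteq> x b" using F_edge xF by blast+
    then have "0 \<le> x a" "x a < 1" "0 \<le> x b" "x b < 1" using x01 by auto
    then show "y a \<noteq> y b"
      by (cases "x a < x i"; cases "x b < x i") (simp_all add: yv[OF ab(1)] yv[OF ab(2)] ab(3))
  qed
  have cls: "orient_of F y \<in> tor_closure_class V E \<omega>"
    unfolding tor_closure_class_def tor_class_def
  proof (intro bexI[OF _ x] CollectI conjI)
    show "acyc_orient F (orient_of F y)" by (rule orient_acyc[OF yF])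
    have "finite S" using finV unfolding S_def by simp
    moreover have "S \<subseteq> V" unfolding S_def by auto
    moreover have "\<forall>s\<in>S. \<forall>w\<in>V. w \<notin> S \<longrightarrow> x s \<le> x w" unfolding S_def by auto
    ultimately show "tor_equiv (orient_of F x) (orient_of F y)"
      using lift_equiv[OF x01 xF] unfolding y_def by blast
  qed
  have Fij: "{i,j} \<in> F" by (rule F_intro) (use ij in auto)
  have yi: "y i = x i" using yv[OF ij(1)] by simp
  have "x i \<noteq> x j" using ij x by blast
  moreover have "0 \<le> x j" "x j < 1" "0 \<le> x i" "x i < 1" using x01 ij by auto
  ultimately have yij: "y i < y j" using yi by (cases "x j < x i") (simp_all add: yv[OF ij(2)])
  have oij: "(i,j) \<in> orient_of F y" using Fij yij unfolding orient_of_def by simp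
  show ?thesis
  proof (cases "k = i \<or> k = j")
    case True
    have "toric_dpath (orient_of F y) [i,j] i j \<and> k \<in> set [i,j]" using toric_dpath2[OF oij ij(3)] True by auto
    then show ?thesis using cls by blast
  next
    case False
    then have kV: "k \<in> V" and dk: "distinct [i,k,j]" and cr: "cyc_restr V E \<omega> [i,k,j]" using k by auto
    have dz: "\<forall>z\<in>Ch. z a \<noteq> z b" if "a \<in> set [i,k,j]" "b \<in> set [i,k,j]" "a \<noteq> b" for a b
    proof
      fix z assume "z \<in> Ch"
      then obtain r where "sorted_wrt (\<lambda>a b. z a < z b) (rotate r [i,k,j])"
        using cr unfolding cyc_restr_def by blast
      then show "z a \<noteq> z b" by (rule cyc_distinct_vals) (use that in auto)
    qed
    have Fik: "{i,k} \<in> F" by (rule F_intro[OF ij(1) kV]) (use dk dz[of i k] in simp_all)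
    have Fkj: "{k,j} \<in> F" by (rule F_intro[OF kV ij(2)]) (use dk dz[of k j] in simp_all)
    obtain r where r0: "r < length [i,k,j]" and r2: "sorted_wrt (\<lambda>a b. x a < x b) (rotate r [i,k,j])"
      using cr x unfolding cyc_restr_def by blast
    have r: "r < 3" "sorted_wrt (\<lambda>a b. x a < x b) (rotate r [i,k,j])" using r0 r2 by simp_all
    have disj: "x i < x k \<and> x k < x j \<or> x k < x j \<and> x j < x i \<or> x j < x i \<and> x i < x k"
      using rot3[OF r(1), of i k j] r(2) by (elim disjE) simp_all
    have b: "0 \<le> x j" "x j < 1" "0 \<le> x i" "x i < 1" "0 \<le> x k" "x k < 1" using x01 ij kV by auto
    have yk: "y k = (if x k < x i then x k + 1 else x k)" by (rule yv[OF kV])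
    have yj: "y j = (if x j < x i then x j + 1 else x j)" by (rule yv[OF ij(2)])
    from disj have "y i < y k \<and> y k < y j"
    proof (elim disjE conjE)
      assume "x i < x k" "x k < x j"
      then show ?thesis using yk yj yi by simp
    next
      assume "x k < x j" "x j < x i"
      then show ?thesis using yk yj yi b by simp
    next
      assume "x j < x i" "x i < x k"
      then show ?thesis using yk yj yi b by simp
    qed
    then have "(i,k) \<in> orient_of F y" "(k,j) \<in> orient_of F y"
      using Fik Fkj unfolding orient_of_def by auto
    then have "toric_dpath (orient_of F y) [i,k,j] i j \<and> k \<in> set [i,k,j]" using toric_dpath3[OF _ _ oij dk] by auto
    then show ?thesis using cls by blast
  qed
qed

lemma move_ch:
  assumes z: "z \<in> Ch" "v \<in> V" "0 \<le> t" "t < 1"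
    and same: "\<forall>u. {u,v} \<in> E \<longrightarrow> (z u < t \<longleftrightarrow> z u < z v) \<and> (t < z u \<longleftrightarrow> z v < z u)"
  shows "z(v:=t) \<in> Ch"
proof -
  have sm: "{u,v} \<in> E \<Longrightarrow> (z u < t \<longleftrightarrow> z u < z v) \<and> (t < z u \<longleftrightarrow> z v < z u)" for u
    using same by blast
  have oeq: "orient_of E (z(v:=t)) = orient_of E z"
  proof (rule pair_set_eqI)
    fix a b
    show "(a,b) \<in> orient_of E (z(v:=t)) \<longleftrightarrow> (a,b) \<in> orient_of E z"
    proof (cases "{a,b} \<in> E")
      case False then show ?thesis unfolding orient_of_def by simp
    next
      case True
      then have ab: "a \<noteq> b" using E_edge by blast
      show ?thesis
      proof (cases "a = v")
        case True
        then have "{b,v} \<in> E" using \<open>{a,b} \<in> E\<close> by (simp add: insert_commute)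
        then show ?thesis using True ab sm[of b] \<open>{a,b} \<in> E\<close> unfolding orient_of_def by auto
      next
        case False
        show ?thesis
        proof (cases "b = v")
          case True
          then show ?thesis using False sm[of a] \<open>{a,b} \<in> E\<close> unfolding orient_of_def by auto
        next
          case False2: False
          then show ?thesis using False unfolding orient_of_def by simp
        qed
      qed
    qed
  qed
  show ?thesis
  proof (rule ch_intro)
    show "\<forall>a\<in>V. 0 \<le> (z(v := t)) a \<and> (z(v := t)) a < 1" using ch_torus[OF z(1)] z(3,4) by simp
    show "\<forall>a. a \<notin> V \<longrightarrow> (z(v := t)) a = 0" using z(1,2) unfolding chamber_def torus_points_def by auto
    show "tor_equiv \<omega> (orient_of E (z(v := t)))" using oeq ch_equiv[OF z(1)] by simp
    show "\<forall>a b. {a, b} \<in> E \<longrightarrow> (z(v := t)) a \<noteq> (z(v := t)) b"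
    proof (intro allI impI)
      fix a b assume e: "{a,b} \<in> E"
      then have ab: "a \<noteq> b" and d: "z a \<noteq> z b" using E_edge ch_Edist[OF z(1)] by blast+
      show "(z(v := t)) a \<noteq> (z(v := t)) b"
      proof (cases "a = v")
        case True
        then have "{b,v} \<in> E" using e by (simp add: insert_commute)
        then show ?thesis using True ab sm[of b] d by auto
      next
        case False
        show ?thesis
        proof (cases "b = v")
          case True
          then show ?thesis using False sm[of a] d e by auto
        next
          case False2: False
          then show ?thesis using False d by simp
        qed
      qed
    qed
  qed
qed

lemma src_F:
  assumes z: "z \<in> Ch" "v \<in> V" and src: "is_source (orient_of E z) v" and e: "{u,v} \<in> F"
  shows "z v < z u"
proof (rule ccontr)
  assume "\<not> z v < z u"
  then have le: "z u \<le> z v" by simp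
  have u: "u \<in> V" "u \<noteq> v" using F_edge[OF e] by auto
  have Enb: "z v < w" if "{w',v} \<in> E" "w = z w'" for w w'
  proof -
    have "(w',v) \<notin> orient_of E z" using src unfolding is_source_def by blast
    then have "\<not> z w' < z v" using that(1) unfolding orient_of_def by simp
    moreover have "z w' \<noteq> z v" using ch_Edist[OF z(1) that(1)] .
    ultimately show ?thesis using that(2) by simp
  qed
  have "z(v := z u) \<in> Ch"
  proof (rule move_ch[OF z])
    show "0 \<le> z u" "z u < 1" using ch_torus[OF z(1) u(1)] by auto
    show "\<forall>w. {w,v} \<in> E \<longrightarrow> (z w < z u \<longleftrightarrow> z w < z v) \<and> (z u < z w \<longleftrightarrow> z v < z w)"
      using Enb le by force
  qed
  from ch_Fdist[OF this e] u(2) show False by simp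
qed

lemma snk_F:
  assumes z: "z \<in> Ch" "v \<in> V" and snk: "\<forall>w. (v,w) \<notin> orient_of E z" and e: "{u,v} \<in> F"
  shows "z u < z v"
proof (rule ccontr)
  assume "\<not> z u < z v"
  then have le: "z v \<le> z u" by simp
  have u: "u \<in> V" "u \<noteq> v" using F_edge[OF e] by auto
  have Enb: "w < z v" if "{w',v} \<in> E" "w = z w'" for w w'
  proof -
    have "{v,w'} \<in> E" using that(1) by (simp add: insert_commute)
    then have "(v,w') \<notin> orient_of E z" using snk by blast
    then have "\<not> z v < z w'" using \<open>{v,w'} \<in> E\<close> unfolding orient_of_def by simp
    moreover have "z w' \<noteq> z v" using ch_Edist[OF z(1) that(1)] .
    ultimately show ?thesis using that(2) by simp
  qed
  have "z(v := z u) \<in> Ch"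
  proof (rule move_ch[OF z])
    show "0 \<le> z u" "z u < 1" using ch_torus[OF z(1) u(1)] by auto
    show "\<forall>w. {w,v} \<in> E \<longrightarrow> (z w < z u \<longleftrightarrow> z w < z v) \<and> (z u < z w \<longleftrightarrow> z v < z w)"
      using Enb le by force
  qed
  from ch_Fdist[OF this e] u(2) show False by simp
qed

lemma Fcyc_step:
  assumes "Fcyc c" "t < length c"
  shows "{c!t, c!(Suc t mod length c)} \<in> F" "c!t \<noteq> c!(Suc t mod length c)"
    "c!t \<in> V" "c!(Suc t mod length c) \<in> V"
  using assms F_edge unfolding Fcyc_def by blast+

lemma step_src:
  assumes z: "z \<in> Ch" "v \<in> V" and src: "is_source (orient_of E z) v"
    and teq: "tor_equiv \<omega> (flip_at (orient_of E z) v)"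
  defines "z' \<equiv> (\<lambda>u. if u \<in> V then (if u = v then 1/2 else z u / 2) else 0)"
  shows "z' \<in> Ch \<and> orient_of E z' = flip_at (orient_of E z) v \<and> (\<forall>c. Fcyc c \<longrightarrow> Dc z' c = Dc z c)"
proof -
  have zb: "0 \<le> z u \<and> z u < 1" if "u \<in> V" for u using ch_torus[OF z(1) that] .
  have Enb: "z v < z u" if "{u,v} \<in> E" for u using src_F[OF z src E_F[OF that]] .
  have oeq: "orient_of E z' = flip_at (orient_of E z) v"
  proof (rule pair_set_eqI)
    fix a b
    show "(a,b) \<in> orient_of E z' \<longleftrightarrow> (a,b) \<in> flip_at (orient_of E z) v"
    proof (cases "a = v")
      case True
      have "\<not> ({v,b} \<in> E \<and> z' v < z' b)"
      proof
        assume h: "{v,b} \<in> E \<and> z' v < z' b"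
        then have "b \<in> V" "b \<noteq> v" using E_edge by blast+
        then show False using h zb[of b] z(2) unfolding z'_def by simp
      qed
      moreover have "\<not> ({b,v} \<in> E \<and> z b < z v)" using Enb[of b] by fastforce
      ultimately show ?thesis using True unfolding flip_at_iff orient_of_def by (simp; blast)
    next
      case False
      show ?thesis
      proof (cases "b = v")
        case True
        have c1: "({a,v} \<in> E \<and> z' a < z' v) \<longleftrightarrow> {a,v} \<in> E"
        proof
          assume "{a,v} \<in> E"
          then have "a \<in> V" using E_edge by blast
          then show "{a,v} \<in> E \<and> z' a < z' v" using \<open>{a,v} \<in> E\<close> False zb[of a] z(2) unfolding z'_def by simp
        qed simp
        have "{v,a} = {a,v}" by (simp add: insert_commute)
        then have c2: "({v,a} \<in> E \<and> z v < z a) \<longleftrightarrow> {a,v} \<in> E" using Enb[of a] by auto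
        show ?thesis using True False c1 c2 unfolding flip_at_iff orient_of_def by simp
      next
        case False2: False
        have "{a,b} \<in> E \<Longrightarrow> (z' a < z' b \<longleftrightarrow> z a < z b)"
          using E_edge False False2 unfolding z'_def by auto
        then show ?thesis using False False2 unfolding flip_at_iff orient_of_def by auto
      qed
    qed
  qed
  have ch: "z' \<in> Ch"
  proof (rule ch_intro)
    show "\<forall>a\<in>V. 0 \<le> z' a \<and> z' a < 1"
    proof
      fix a assume "a \<in> V"
      then have "0 \<le> z a" "z a < 1" using zb by auto
      then show "0 \<le> z' a \<and> z' a < 1" unfolding z'_def by auto
    qed
    show "\<forall>a. a \<notin> V \<longrightarrow> z' a = 0" unfolding z'_def by simp
    show "tor_equiv \<omega> (orient_of E z')" using oeq teq by simp
    show "\<forall>a b. {a, b} \<in> E \<longrightarrow> z' a \<noteq> z' b"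
    proof (intro allI impI)
      fix a b assume e: "{a,b} \<in> E"
      then have ab: "a \<noteq> b" "a \<in> V" "b \<in> V" and d: "z a \<noteq> z b" using E_edge ch_Edist[OF z(1)] by blast+
      show "z' a \<noteq> z' b" using ab d zb[of a] zb[of b] unfolding z'_def by auto
    qed
  qed
  have D: "Dc z' c = Dc z c" if c: "Fcyc c" for c
    unfolding Dc_def
  proof (rule sum_shift_cancel[where h = "\<lambda>t. c!t = v"], intro allI impI)
    fix t assume t: "t < length c"
    define a where "a = c!t"
    define b where "b = c!(Suc t mod length c)"
    have e: "{a,b} \<in> F" "a \<noteq> b" "a \<in> V" "b \<in> V" using Fcyc_step[OF c t] unfolding a_def b_def by auto
    have e': "{b,a} \<in> F" using e(1) by (simp add: insert_commute)
    show "(if z' b < z' a then 1 else 0) + (if b = v then 1 else 0) =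
          (if z b < z a then 1 else 0) + (if a = v then 1 else (0::nat))"
    proof (cases "b = v")
      case True
      have "z v < z a" using src_F[OF z src] e(1) True by simp
      then show ?thesis using True e zb[of a] unfolding z'_def by auto
    next
      case False
      show ?thesis
      proof (cases "a = v")
        case True
        have "z v < z b" using src_F[OF z src] e' True by simp
        then show ?thesis using True False e zb[of b] unfolding z'_def by auto
      next
        case False2: False
        then show ?thesis using False e unfolding z'_def by auto
      qed
    qed
  qed
  show ?thesis using ch oeq D by blast
qed

lemma step_snk:
  assumes z: "z \<in> Ch" "v \<in> V" and snk: "\<forall>w. (v,w) \<notin> orient_of E z"
    and teq: "tor_equiv \<omega> (flip_at (orient_of E z) v)"
  defines "z' \<equiv> (\<lambda>u. if u \<in> V then (if u = v then 0 else (z u + 1) / 2) else 0)"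
  shows "z' \<in> Ch \<and> orient_of E z' = flip_at (orient_of E z) v \<and> (\<forall>c. Fcyc c \<longrightarrow> Dc z' c = Dc z c)"
proof -
  have zb: "0 \<le> z u \<and> z u < 1" if "u \<in> V" for u using ch_torus[OF z(1) that] .
  have Enb: "z u < z v" if "{u,v} \<in> E" for u using snk_F[OF z snk E_F[OF that]] .
  have oeq: "orient_of E z' = flip_at (orient_of E z) v"
  proof (rule pair_set_eqI)
    fix a b
    show "(a,b) \<in> orient_of E z' \<longleftrightarrow> (a,b) \<in> flip_at (orient_of E z) v"
    proof (cases "a = v")
      case True
      have c1: "({v,b} \<in> E \<and> z' v < z' b) \<longleftrightarrow> {v,b} \<in> E"
      proof
        assume "{v,b} \<in> E"
        then have "b \<in> V" "b \<noteq> v" using E_edge by blast+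
        then show "{v,b} \<in> E \<and> z' v < z' b" using \<open>{v,b} \<in> E\<close> zb[of b] z(2) unfolding z'_def by simp
      qed simp
      have "{b,v} = {v,b}" by (simp add: insert_commute)
      then have c2: "({b,v} \<in> E \<and> z b < z v) \<longleftrightarrow> {v,b} \<in> E" using Enb[of b] by auto
      show ?thesis using True c1 c2 unfolding flip_at_iff orient_of_def by simp
    next
      case False
      show ?thesis
      proof (cases "b = v")
        case True
        have "\<not> ({a,v} \<in> E \<and> z' a < z' v)"
        proof
          assume h: "{a,v} \<in> E \<and> z' a < z' v"
          then have "a \<in> V" "a \<noteq> v" using E_edge by blast+
          then show False using h zb[of a] z(2) unfolding z'_def by simp
        qed
        moreover have "\<not> ({v,a} \<in> E \<and> z v < z a)"
          using Enb[of a] by (auto simp: insert_commute)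
        ultimately show ?thesis using True False unfolding flip_at_iff orient_of_def by (simp; blast)
      next
        case False2: False
        have "{a,b} \<in> E \<Longrightarrow> (z' a < z' b \<longleftrightarrow> z a < z b)"
          using E_edge False False2 unfolding z'_def by auto
        then show ?thesis using False False2 unfolding flip_at_iff orient_of_def by auto
      qed
    qed
  qed
  have ch: "z' \<in> Ch"
  proof (rule ch_intro)
    show "\<forall>a\<in>V. 0 \<le> z' a \<and> z' a < 1"
    proof
      fix a assume "a \<in> V"
      then have "0 \<le> z a" "z a < 1" using zb by auto
      then show "0 \<le> z' a \<and> z' a < 1" unfolding z'_def by auto
    qed
    show "\<forall>a. a \<notin> V \<longrightarrow> z' a = 0" unfolding z'_def by simp
    show "tor_equiv \<omega> (orient_of E z')" using oeq teq by simp
    show "\<forall>a b. {a, b} \<in> E \<longrightarrow> z' a \<noteq> z' b"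
    proof (intro allI impI)
      fix a b assume e: "{a,b} \<in> E"
      then have ab: "a \<noteq> b" "a \<in> V" "b \<in> V" and d: "z a \<noteq> z b" using E_edge ch_Edist[OF z(1)] by blast+
      show "z' a \<noteq> z' b" using ab d zb[of a] zb[of b] unfolding z'_def by auto
    qed
  qed
  have D: "Dc z c = Dc z' c" if c: "Fcyc c" for c
    unfolding Dc_def
  proof (rule sum_shift_cancel[where h = "\<lambda>t. c!t = v"], intro allI impI)
    fix t assume t: "t < length c"
    define a where "a = c!t"
    define b where "b = c!(Suc t mod length c)"
    have e: "{a,b} \<in> F" "a \<noteq> b" "a \<in> V" "b \<in> V" using Fcyc_step[OF c t] unfolding a_def b_def by auto
    have e': "{b,a} \<in> F" using e(1) by (simp add: insert_commute)
    show "(if z b < z a then 1 else 0) + (if b = v then 1 else 0) =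
          (if z' b < z' a then 1 else 0) + (if a = v then 1 else (0::nat))"
    proof (cases "b = v")
      case True
      have "z a < z v" using snk_F[OF z snk] e(1) True by simp
      then show ?thesis using True e zb[of a] unfolding z'_def by auto
    next
      case False
      show ?thesis
      proof (cases "a = v")
        case True
        have "z b < z v" using snk_F[OF z snk] e' True by simp
        then show ?thesis using True False e zb[of b] unfolding z'_def by auto
      next
        case False2: False
        then show ?thesis using False e unfolding z'_def by auto
      qed
    qed
  qed
  show ?thesis using ch oeq D by auto
qed

lemma flip_outside:
  assumes "v \<notin> V" shows "flip_at (orient_of E z) v = orient_of E z"
proof (rule pair_set_eqI)
  fix a b
  have "(a,b) \<in> orient_of E z \<Longrightarrow> a \<in> V \<and> b \<in> V" "(b,a) \<in> orient_of E z \<Longrightarrow> a \<in> V \<and> b \<in> V"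
    unfolding orient_of_def using E_edge by auto
  then show "(a,b) \<in> flip_at (orient_of E z) v \<longleftrightarrow> (a,b) \<in> orient_of E z"
    using assms unfolding flip_at_iff by auto
qed

lemma chain_D:
  assumes "tor_equiv R0 R" "x \<in> Ch" "orient_of E x = R0"
  shows "\<exists>z\<in>Ch. orient_of E z = R \<and> (\<forall>c. Fcyc c \<longrightarrow> Dc z c = Dc x c)"
proof -
  have "(\<lambda>a b. flip_step a b \<or> flip_step b a)\<^sup>*\<^sup>* R0 R" using assms(1) unfolding tor_equiv_def .
  then show ?thesis
  proof (induction rule: rtranclp_induct)
    case base
    then show ?case using assms(2,3) by blast
  next
    case (step R R')
    obtain z where z: "z \<in> Ch" "orient_of E z = R" "\<forall>c. Fcyc c \<longrightarrow> Dc z c = Dc x c" using step.IH by blast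
    have "tor_equiv R0 R" using step.hyps(1) unfolding tor_equiv_def .
    then have teqR: "tor_equiv \<omega> R" using ch_equiv[OF assms(2)] assms(3) tor_equiv_trans by blast
    have teq: "tor_equiv \<omega> R'" by (rule tor_equiv_step[OF teqR step.hyps(2)])
    from step.hyps(2) show ?case
    proof
      assume "flip_step R R'"
      then obtain v where v: "is_source R v" "R' = flip_at R v" unfolding flip_step_def by blast
      show ?case
      proof (cases "v \<in> V")
        case True
        have "tor_equiv \<omega> (flip_at (orient_of E z) v)" using teq v z(2) by simp
        from step_src[OF z(1) True _ this] v z(2,3) show ?thesis by auto
      next
        case False
        then show ?thesis using flip_outside[of v z] v z by auto
      qed
    next
      assume "flip_step R' R"
      then obtain v where v: "is_source R' v" "R = flip_at R' v" unfolding flip_step_def by blast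
      then have R': "R' = flip_at R v" using flip_at_invol by metis
      have snk: "\<forall>w. (v,w) \<notin> orient_of E z"
        using v z(2) unfolding is_source_def by (auto simp: flip_at_iff)
      show ?case
      proof (cases "v \<in> V")
        case True
        have "tor_equiv \<omega> (flip_at (orient_of E z) v)" using teq R' z(2) by simp
        from step_snk[OF z(1) True snk this] R' z(2,3) show ?thesis by auto
      next
        case False
        then show ?thesis using flip_outside[of v z] R' z by auto
      qed
    qed
  qed
qed

lemma conv_lt: "0 < (t::real) \<Longrightarrow> t < 1 \<Longrightarrow> p < q \<Longrightarrow> p' < q' \<Longrightarrow> (1-t)*p + t*p' < (1-t)*q + t*q'"
  by (simp add: add_strict_mono mult_strict_left_mono)

lemma seg:
  assumes x: "x \<in> Ch" and y: "y \<in> Ch" and o: "orient_of E x = orient_of E y"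
    and e: "{a,b} \<in> F" and lt: "x a < x b"
  shows "y a < y b"
proof (rule ccontr)
  assume "\<not> y a < y b"
  moreover have "y a \<noteq> y b" using ch_Fdist[OF y e] .
  ultimately have lt2: "y b < y a" by simp
  define d1 where "d1 = x b - x a"
  define d2 where "d2 = y a - y b"
  have d: "d1 > 0" "d2 > 0" using lt lt2 unfolding d1_def d2_def by auto
  define t where "t = d1 / (d1 + d2)"
  have t: "0 < t" "t < 1" using d unfolding t_def by (auto simp: field_simps)
  define s where "s = (\<lambda>w. (1-t) * x w + t * y w)"
  have sab: "s a = s b"
  proof -
    have h: "t * (d1 + d2) = d1" using d unfolding t_def by (simp add: field_simps)
    have "s a - s b = t * (d1 + d2) - d1" unfolding s_def d1_def d2_def by (simp add: algebra_simps)
    then show ?thesis using h by simp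
  qed
  have Ecmp: "s c < s c'" if "{c,c'} \<in> E" "x c < x c'" for c c'
  proof -
    have "(c,c') \<in> orient_of E x" using that unfolding orient_of_def by simp
    then have "(c,c') \<in> orient_of E y" using o by simp
    then have "y c < y c'" unfolding orient_of_def by simp
    from conv_lt[OF t that(2) this] show ?thesis unfolding s_def .
  qed
  have soeq: "orient_of E s = orient_of E x"
  proof (rule pair_set_eqI)
    fix c c'
    show "(c,c') \<in> orient_of E s \<longleftrightarrow> (c,c') \<in> orient_of E x"
    proof (cases "{c,c'} \<in> E")
      case True
      have "{c',c} \<in> E" using True by (simp add: insert_commute)
      have ne: "x c \<noteq> x c'" using ch_Edist[OF x True] .
      have "s c < s c' \<longleftrightarrow> x c < x c'"
      proof
        assume h: "s c < s c'"
        show "x c < x c'"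
        proof (rule ccontr)
          assume "\<not> x c < x c'"
          then have "x c' < x c" using ne by simp
          then have "s c' < s c" by (rule Ecmp[OF \<open>{c',c} \<in> E\<close>])
          with h show False by simp
        qed
      next
        assume "x c < x c'"
        then show "s c < s c'" by (rule Ecmp[OF True])
      qed
      then show ?thesis using True unfolding orient_of_def by simp
    next
      case False then show ?thesis unfolding orient_of_def by simp
    qed
  qed
  have "s \<in> Ch"
  proof (rule ch_intro)
    show "\<forall>w\<in>V. 0 \<le> s w \<and> s w < 1"
    proof
      fix w assume "w \<in> V"
      then have "0 \<le> x w" "x w < 1" "0 \<le> y w" "y w < 1" using ch_torus x y by auto
      moreover have "(1-t) * x w + t * y w < (1-t) * 1 + t * 1" by (rule conv_lt[OF t]) (use calculation in auto)
      ultimately show "0 \<le> s w \<and> s w < 1" unfolding s_def using t by simp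
    qed
    show "\<forall>w. w \<notin> V \<longrightarrow> s w = 0" using x y unfolding s_def chamber_def torus_points_def by auto
    show "\<forall>c c'. {c,c'} \<in> E \<longrightarrow> s c \<noteq> s c'"
    proof (intro allI impI)
      fix c c' assume e: "{c,c'} \<in> E"
      have "{c',c} \<in> E" using e by (simp add: insert_commute)
      have "x c \<noteq> x c'" using ch_Edist[OF x e] .
      then have "x c < x c' \<or> x c' < x c" by auto
      then show "s c \<noteq> s c'"
      proof
        assume "x c < x c'" then have "s c < s c'" by (rule Ecmp[OF e]) then show ?thesis by simp
      next
        assume "x c' < x c" then have "s c' < s c" by (rule Ecmp[OF \<open>{c',c} \<in> E\<close>]) then show ?thesis by simp
      qed
    qed
    show "tor_equiv \<omega> (orient_of E s)" using soeq ch_equiv[OF x] by simp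
  qed
  from ch_Fdist[OF this e] sab show False by simp
qed

lemma D_seg:
  assumes x: "x \<in> Ch" and y: "y \<in> Ch" and o: "orient_of E x = orient_of E y" and c: "Fcyc c"
  shows "Dc x c = Dc y c"
  unfolding Dc_def
proof (rule sum.cong[OF refl])
  fix t assume "t \<in> {..<length c}"
  then have t: "t < length c" by simp
  have e: "{c!(Suc t mod length c), c!t} \<in> F" using Fcyc_step(1)[OF c t] by (simp add: insert_commute)
  have "x (c!(Suc t mod length c)) < x (c!t) \<longleftrightarrow> y (c!(Suc t mod length c)) < y (c!t)"
    using seg[OF x y o e] seg[OF y x o[symmetric] e] by blast
  then show "(if x (c!(Suc t mod length c)) < x (c!t) then 1 else 0) = (if y (c!(Suc t mod length c)) < y (c!t) then 1 else (0::nat))"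
    by simp
qed

lemma D_const:
  assumes x: "x \<in> Ch" and y: "y \<in> Ch" and c: "Fcyc c"
  shows "Dc x c = Dc y c"
proof -
  have "tor_equiv (orient_of E x) (orient_of E y)"
    using tor_equiv_trans[OF tor_equiv_sym[OF ch_equiv[OF x]] ch_equiv[OF y]] .
  from chain_D[OF this x refl] obtain z where z: "z \<in> Ch" "orient_of E z = orient_of E y" "Dc z c = Dc x c"
    using c by blast
  then show ?thesis using D_seg[OF z(1) y z(2) c] by simp
qed

lemma B_flip:
  assumes R: "is_orientation F R" and src: "is_source R v" and c: "Fcyc c"
  shows "Bc (flip_at R v) c = Bc R c"
  unfolding Bc_def
proof (rule sum_shift_cancel[where h = "\<lambda>t. c!t = v"], intro allI impI)
  fix t assume t: "t < length c"
  define a where "a = c!t"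
  define b where "b = c!(Suc t mod length c)"
  have e: "{a,b} \<in> F" "a \<noteq> b" using Fcyc_step[OF c t] unfolding a_def b_def by auto
  have e': "{b,a} \<in> F" using e(1) by (simp add: insert_commute)
  have o1: "(a,b) \<in> R \<longleftrightarrow> (b,a) \<notin> R" using R e unfolding is_orientation_def by blast
  show "(if (a, b) \<in> flip_at R v then 0 else 1) + (if b = v then 1 else 0) =
        (if (a, b) \<in> R then 0 else 1) + (if a = v then 1 else (0::nat))"
  proof (cases "b = v")
    case True
    have "(a,v) \<notin> R" using src unfolding is_source_def by blast
    then have "(v,a) \<in> R" using o1 True by blast
    then show ?thesis using True e(2) \<open>(a,v) \<notin> R\<close> unfolding flip_at_iff by simp
  next
    case False
    show ?thesis
    proof (cases "a = v")
      case True
      have "(b,v) \<notin> R" using src unfolding is_source_def by blast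
      then have "(v,b) \<in> R" using o1 True by blast
      then show ?thesis using True False \<open>(b,v) \<notin> R\<close> unfolding flip_at_iff by simp
    next
      case False2: False
      then show ?thesis using False unfolding flip_at_iff by simp
    qed
  qed
qed

lemma chain_B:
  assumes "tor_equiv R0 R" "is_orientation F R0" "Fcyc c"
  shows "is_orientation F R \<and> Bc R c = Bc R0 c"
proof -
  have "(\<lambda>a b. flip_step a b \<or> flip_step b a)\<^sup>*\<^sup>* R0 R" using assms(1) unfolding tor_equiv_def .
  then show ?thesis
  proof (induction rule: rtranclp_induct)
    case base then show ?case using assms(2) by simp
  next
    case (step R R')
    from step.hyps(2) show ?case
    proof
      assume "flip_step R R'"
      then obtain v where v: "is_source R v" "R' = flip_at R v" unfolding flip_step_def by blast
      then show ?case using step.IH orient_flip B_flip[OF _ v(1) assms(3)] by auto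
    next
      assume "flip_step R' R"
      then obtain v where v: "is_source R' v" "R = flip_at R' v" unfolding flip_step_def by blast
      then have R': "R' = flip_at R v" using flip_at_invol by metis
      have oR': "is_orientation F R'" using R' orient_flip step.IH by blast
      have "Bc R c = Bc R' c" using B_flip[OF oR' v(1) assms(3)] v(2) by simp
      then show ?case using oR' step.IH by simp
    qed
  qed
qed

lemma B_D:
  assumes y: "y \<in> Ch" and c: "Fcyc c"
  shows "Bc (orient_of F y) c = Dc y c"
  unfolding Bc_def Dc_def
proof (rule sum.cong[OF refl])
  fix t assume "t \<in> {..<length c}"
  then have t: "t < length c" by simp
  have e: "{c!t, c!(Suc t mod length c)} \<in> F" using Fcyc_step(1)[OF c t] .
  have "y (c!t) \<noteq> y (c!(Suc t mod length c))" using ch_Fdist[OF y e] .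
  then show "(if (c!t, c!(Suc t mod length c)) \<in> orient_of F y then 0 else 1) =
        (if y (c!(Suc t mod length c)) < y (c!t) then 1 else (0::nat))"
    using e unfolding orient_of_def by auto
qed

lemma mono_asc:
  fixes x :: "nat \<Rightarrow> real"
  assumes asc: "\<And>t. t < L \<Longrightarrow> t \<noteq> d \<Longrightarrow> x (p!t) < x (p!(Suc t mod L))"
  shows "a < b \<Longrightarrow> b < L \<Longrightarrow> (\<forall>t. a \<le> t \<and> t < b \<longrightarrow> t \<noteq> d) \<Longrightarrow> x (p!a) < x (p!b)"
proof (induction b)
  case 0 then show ?case by simp
next
  case (Suc b)
  have bL: "b < L" using Suc.prems by simp
  have bd: "b \<noteq> d" using Suc.prems by simp
  have st: "x (p!b) < x (p!(Suc b))" using asc[OF bL bd] Suc.prems(2) by simp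
  show ?case
  proof (cases "a = b")
    case True then show ?thesis using st by simp
  next
    case False
    then have "x (p!a) < x (p!b)" using Suc.IH Suc.prems by auto
    then show ?thesis using st by simp
  qed
qed

lemma one_descent:
  assumes c: "Fcyc p" and x: "x \<in> Ch" and D: "Dc x p = 1" and L2: "2 \<le> length p"
    and k: "k \<in> set p" "k \<noteq> p!0" "k \<noteq> p!(length p - 1)"
  shows "\<exists>r<length [p!0, k, p!(length p - 1)]. sorted_wrt (\<lambda>a b. x a < x b) (rotate r [p!0, k, p!(length p - 1)])"
proof -
  define L where "L = length p"
  have "card {t\<in>{..<L}. x (p!(Suc t mod L)) < x (p!t)} = 1"
    using D unfolding Dc_def L_def by (simp add: sum.If_cases Int_def)
  then obtain d where d: "{t\<in>{..<L}. x (p!(Suc t mod L)) < x (p!t)} = {d}" by (rule card_1_singletonE)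
  then have dL: "d < L" by blast
  have asc: "x (p!t) < x (p!(Suc t mod L))" if "t < L" "t \<noteq> d" for t
  proof -
    have "\<not> x (p!(Suc t mod L)) < x (p!t)" using d that by blast
    moreover have "x (p!t) \<noteq> x (p!(Suc t mod L))" using ch_Fdist[OF x Fcyc_step(1)[OF c]] that(1) unfolding L_def by blast
    ultimately show ?thesis by simp
  qed
  note mono = mono_asc[of L d x p, OF asc]
  obtain q where q: "q < L" "p!q = k" using k(1) unfolding L_def by (auto simp: in_set_conv_nth)
  have q0: "0 < q" using k(2) q by (cases q) auto
  have "q \<noteq> L - 1" using k(3) q unfolding L_def by auto
  then have qL: "q < L - 1" using q(1) by linarith
  have wrap: "x (p!(L - 1)) < x (p!0)" if "d \<noteq> L - 1"
  proof -
    have "x (p!(L-1)) < x (p!(Suc (L-1) mod L))" using asc[of "L-1"] that L2 unfolding L_def by simp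
    moreover have "Suc (L-1) = L" using L2 unfolding L_def by simp
    then have "Suc (L-1) mod L = 0" by simp
    ultimately show ?thesis by simp
  qed
  have L1: "L - 1 < L" using L2 unfolding L_def by simp
  let ?i = "p!0" and ?j = "p!(L - 1)"
  have "sorted_wrt (\<lambda>a b. x a < x b) (rotate 0 [?i, k, ?j]) \<or>
        sorted_wrt (\<lambda>a b. x a < x b) (rotate 1 [?i, k, ?j]) \<or>
        sorted_wrt (\<lambda>a b. x a < x b) (rotate 2 [?i, k, ?j])"
  proof (cases "d = L - 1")
    case True
    have "x ?i < x k" using mono[of 0 q] q q0 qL True by auto
    moreover have "x k < x ?j" using mono[of q "L-1"] q qL True L1 by auto
    ultimately show ?thesis by simp
  next
    case False
    note w = wrap[OF False]
    show ?thesis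
    proof (cases "d < q")
      case True
      have "x k < x ?j" using mono[of q "L-1"] q qL True L1 by auto
      then show ?thesis using w by (simp add: numeral_2_eq_2)
    next
      case False2: False
      have "x ?i < x k" using mono[of 0 q] q q0 qL False2 by auto
      then show ?thesis using w by (simp add: numeral_2_eq_2 rotate1_def)
    qed
  qed
  then show ?thesis unfolding L_def[symmetric]
  proof (elim disjE)
    assume h: "sorted_wrt (\<lambda>a b. x a < x b) (rotate 0 [?i, k, ?j])"
    show "\<exists>r<length [?i, k, ?j]. sorted_wrt (\<lambda>a b. x a < x b) (rotate r [?i, k, ?j])"
      by (rule exI[of _ 0]) (use h in simp)
  next
    assume h: "sorted_wrt (\<lambda>a b. x a < x b) (rotate 1 [?i, k, ?j])"
    show "\<exists>r<length [?i, k, ?j]. sorted_wrt (\<lambda>a b. x a < x b) (rotate r [?i, k, ?j])"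
      by (rule exI[of _ 1]) (use h in simp)
  next
    assume h: "sorted_wrt (\<lambda>a b. x a < x b) (rotate 2 [?i, k, ?j])"
    show "\<exists>r<length [?i, k, ?j]. sorted_wrt (\<lambda>a b. x a < x b) (rotate r [?i, k, ?j])"
      by (rule exI[of _ 2]) (use h in simp)
  qed
qed

lemma back_dir:
  assumes ij: "i \<noteq> j" and cls: "\<omega>' \<in> tor_closure_class V E \<omega>" and pth: "toric_dpath \<omega>' p i j"
  shows "{i,j} \<in> F"
    and "k \<in> set p \<Longrightarrow> k \<noteq> i \<Longrightarrow> k \<noteq> j \<Longrightarrow> x \<in> Ch \<Longrightarrow> \<exists>r<length [i,k,j]. sorted_wrt (\<lambda>a b. x a < x b) (rotate r [i,k,j])"
proof -
  obtain y where y: "y \<in> Ch" "acyc_orient F \<omega>'" "tor_equiv (orient_of F y) \<omega>'"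
    using cls unfolding tor_closure_class_def tor_class_def by blast
  have ori: "is_orientation F \<omega>'" using y(2) unfolding acyc_orient_def by simp
  have osub: "{a,b} \<in> F \<and> a \<noteq> b" if "(a,b) \<in> \<omega>'" for a b
    using ori that unfolding is_orientation_def by blast
  have pne: "p \<noteq> []" and pd: "distinct p" and ph: "hd p = i" and pl: "last p = j"
    and pst: "\<forall>q. Suc q < length p \<longrightarrow> (p!q, p!Suc q) \<in> \<omega>'"
    and pij: "2 \<le> length p \<longrightarrow> (i,j) \<in> \<omega>'"
    using pth unfolding toric_dpath_def by auto
  define L where "L = length p"
  have L2: "2 \<le> L"
  proof (rule ccontr)
    assume "\<not> 2 \<le> L"
    moreover have "length p \<noteq> 0" using pne by simp
    ultimately have "length p = Suc 0" unfolding L_def by linarith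
    then obtain a where "p = [a]" by (auto simp: length_Suc_conv)
    then show False using ph pl ij by simp
  qed
  have oij: "(i,j) \<in> \<omega>'" using pij L2 unfolding L_def by simp
  show Fij: "{i,j} \<in> F" using osub[OF oij] by simp
  have nji: "(j,i) \<notin> \<omega>'" using ori Fij ij oij unfolding is_orientation_def by blast
  have p0: "p!0 = i" using ph pne by (simp add: hd_conv_nth)
  have pL: "p!(L-1) = j" using pl pne unfolding L_def by (simp add: last_conv_nth)
  have c: "Fcyc p" unfolding Fcyc_def
  proof (intro allI impI)
    fix t assume t: "t < length p"
    show "{p!t, p!(Suc t mod length p)} \<in> F"
    proof (cases "Suc t < length p")
      case True then show ?thesis using pst osub by simp
    next
      case False
      then have tl: "Suc t = length p" using t by simp
      then have "t = L - 1" "Suc t mod length p = 0" unfolding L_def by auto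
      then show ?thesis using p0 pL Fij by (simp add: insert_commute)
    qed
  qed
  have B1: "Bc \<omega>' p = 1"
  proof -
    obtain m where m: "L = Suc m" using L2 by (cases L) auto
    have "Bc \<omega>' p = (\<Sum>t<m. if (p!t, p!(Suc t mod L)) \<in> \<omega>' then 0 else 1) + (if (p!m, p!(Suc m mod L)) \<in> \<omega>' then 0 else (1::nat))"
      unfolding Bc_def L_def[symmetric] m by simp
    also have "(\<Sum>t<m. if (p!t, p!(Suc t mod L)) \<in> \<omega>' then 0 else (1::nat)) = 0"
    proof (rule sum.neutral, intro ballI)
      fix t assume "t \<in> {..<m}"
      then have "Suc t < L" using m by simp
      then show "(if (p!t, p!(Suc t mod L)) \<in> \<omega>' then 0 else (1::nat)) = 0" using pst unfolding L_def by simp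
    qed
    also have "(p!m, p!(Suc m mod L)) = (j,i)" using p0 pL m by simp
    finally show ?thesis using nji by simp
  qed
  have yF: "\<forall>a b. {a,b} \<in> F \<longrightarrow> a \<noteq> b \<longrightarrow> y a \<noteq> y b" using ch_Fdist[OF y(1)] by blast
  have oy: "is_orientation F (orient_of F y)" using orient_acyc[OF yF] unfolding acyc_orient_def by simp
  have "Bc \<omega>' p = Bc (orient_of F y) p" using chain_B[OF y(3) oy c] by simp
  then have Dy: "Dc y p = 1" using B1 B_D[OF y(1) c] by simp
  assume k: "k \<in> set p" "k \<noteq> i" "k \<noteq> j" and x: "x \<in> Ch"
  have "Dc x p = 1" using D_const[OF x y(1) c] Dy by simp
  from one_descent[OF c x this L2[unfolded L_def] k(1)] k p0 pL
  show "\<exists>r<length [i,k,j]. sorted_wrt (\<lambda>a b. x a < x b) (rotate r [i,k,j])" unfolding L_def by simp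
qed

end

theorem mainTheorem6:
  fixes n :: nat and E :: "nat set set" and \<omega> :: "(nat \<times> nat) set" and i j k :: nat
  assumes "simple_graph {1..n} E"
    and "acyc_orient E \<omega>"
    and "i \<in> {1..n}" and "j \<in> {1..n}" and "k \<in> {1..n}"
  shows "k \<in> toric_interval {1..n} E \<omega> i j \<longleftrightarrow>
         (\<exists>\<omega>'\<in>tor_closure_class {1..n} E \<omega>. \<exists>p. toric_dpath \<omega>' p i j \<and> k \<in> set p)"
proof -
  interpret tp "{1..n}" E \<omega> using assms(1,2) by unfold_locales
  obtain x0 where x0: "x0 \<in> chamber {1..n} E \<omega>" using ch_nonempty by blast
  show ?thesis
  proof (cases "i = j")
    case True
    have L: "k \<in> toric_interval {1..n} E \<omega> i j \<longleftrightarrow> k = i" using True unfolding toric_interval_def by simp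
    have R: "(\<exists>\<omega>'\<in>tor_closure_class {1..n} E \<omega>. \<exists>p. toric_dpath \<omega>' p i j \<and> k \<in> set p) \<longleftrightarrow> k = i"
    proof
      assume "\<exists>\<omega>'\<in>tor_closure_class {1..n} E \<omega>. \<exists>p. toric_dpath \<omega>' p i j \<and> k \<in> set p"
      then obtain \<omega>' p where p: "toric_dpath \<omega>' p i j" "k \<in> set p" by blast
      then have "p \<noteq> []" "distinct p" "hd p = i" "last p = i" using True unfolding toric_dpath_def by auto
      then have "p = [i]" using distinct_hd_last by metis
      then show "k = i" using p(2) by simp
    next
      assume ki: "k = i"
      have yF: "\<forall>a b. {a,b} \<in> tor_closure {1..n} E \<omega> \<longrightarrow> a \<noteq> b \<longrightarrow> x0 a \<noteq> x0 b"
        using ch_Fdist[OF x0] by blast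
      have cls: "orient_of (tor_closure {1..n} E \<omega>) x0 \<in> tor_closure_class {1..n} E \<omega>"
        unfolding tor_closure_class_def tor_class_def
        using x0 orient_acyc[OF yF] tor_equiv_refl by blast
      have "toric_dpath (orient_of (tor_closure {1..n} E \<omega>) x0) [i] i j" using True unfolding toric_dpath_def by simp
      then have "toric_dpath (orient_of (tor_closure {1..n} E \<omega>) x0) [i] i j \<and> k \<in> set [i]" using ki by simp
      then show "\<exists>\<omega>'\<in>tor_closure_class {1..n} E \<omega>. \<exists>p. toric_dpath \<omega>' p i j \<and> k \<in> set p"
        using cls by blast
    qed
    show ?thesis using L R by simp
  next
    case False
    show ?thesis
    proof
      assume "k \<in> toric_interval {1..n} E \<omega> i j"
      then have ch: "toric_chain {1..n} E \<omega> {i,j}"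
        and kk: "k = i \<or> k = j \<or> (k \<in> {1..n} \<and> distinct [i,k,j] \<and> cyc_restr {1..n} E \<omega> [i,k,j])"
        using False unfolding toric_interval_def by (auto split: if_splits)
      from ch obtain l where l: "distinct l" "set l = {i,j}" "cyc_restr {1..n} E \<omega> l"
        unfolding toric_chain_def by blast
      have "\<forall>z\<in>chamber {1..n} E \<omega>. z i \<noteq> z j"
      proof
        fix z assume "z \<in> chamber {1..n} E \<omega>"
        then obtain r where "sorted_wrt (\<lambda>a b. z a < z b) (rotate r l)" using l(3) unfolding cyc_restr_def by blast
        then show "z i \<noteq> z j" by (rule cyc_distinct_vals) (use l(2) False in auto)
      qed
      then show "\<exists>\<omega>'\<in>tor_closure_class {1..n} E \<omega>. \<exists>p. toric_dpath \<omega>' p i j \<and> k \<in> set p"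
        using fwd[OF x0 assms(3,4) False _ kk] by blast
    next
      assume "\<exists>\<omega>'\<in>tor_closure_class {1..n} E \<omega>. \<exists>p. toric_dpath \<omega>' p i j \<and> k \<in> set p"
      then obtain \<omega>' p where cls: "\<omega>' \<in> tor_closure_class {1..n} E \<omega>" and p: "toric_dpath \<omega>' p i j" "k \<in> set p" by blast
      have Fij: "{i,j} \<in> tor_closure {1..n} E \<omega>" using back_dir(1)[OF False cls p(1)] .
      have chain: "toric_chain {1..n} E \<omega> {i,j}"
        unfolding toric_chain_def
      proof (intro exI[of _ "[i,j]"] conjI)
        show "distinct [i,j]" using False by simp
        show "set [i,j] = {i,j}" by simp
        show "{i,j} \<subseteq> {1..n}" using assms(3,4) by simp
        show "cyc_restr {1..n} E \<omega> [i,j]" unfolding cyc_restr_def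
        proof
          fix z assume z: "z \<in> chamber {1..n} E \<omega>"
          have "z i \<noteq> z j" using ch_Fdist[OF z Fij] .
          then have "z i < z j \<or> z j < z i" by auto
          then show "\<exists>r<length [i,j]. sorted_wrt (\<lambda>a b. z a < z b) (rotate r [i,j])"
          proof
            assume "z i < z j" then show ?thesis by (intro exI[of _ 0]) simp
          next
            assume "z j < z i" then show ?thesis by (intro exI[of _ 1]) simp
          qed
        qed
      qed
      show "k \<in> toric_interval {1..n} E \<omega> i j"
      proof (cases "k = i \<or> k = j")
        case True
        then show ?thesis using False chain unfolding toric_interval_def by auto
      next
        case kn: False
        have "cyc_restr {1..n} E \<omega> [i,k,j]" unfolding cyc_restr_def
          using back_dir(2)[OF False cls p(1) p(2)] kn by blast
        then show ?thesis using False chain kn assms(5) unfolding toric_interval_def by auto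
      qed
    qed
  qed
qed

end
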